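(* If $T$ and $T'$ are proper caterpillars with $\Phi(T)=\Phi(T')$, then $T$ and $T'$ are isomorphic. In other words, the map $\Phi$ from (isomorphism classes of) proper caterpillars to reverse-classes of integer compositions is one-to-one.
   Context: A composition is a finite nonempty sequence $\beta=\beta_1\beta_2\cdots\beta_k$ of positive integers; its reverse is $\beta_k\cdots\beta_2\beta_1$, and its reverse-class is $[\beta]^*=\{\beta,\text{reverse of }\beta\}$. A caterpillar is a tree in which the subgraph induced by the internal (non-leaf) vertices is a non-trivial path (the spine); it is proper if every internal vertex is adjacent to at least one leaf. For a proper caterpillar $T$ with spine $v_1v_2\cdots v_k$ (consecutive vertices adjacent), let $L(T)$ be the set of edges not on the spine and let $\beta_i$ be the number of vertices of the connected component of $(V(T),L(T))$ containing $v_i$ (i.e. $1$ plus the number of leaves adjacent to $v_i$). Define $\Phi(T)=[\beta_1\beta_2\cdots\beta_k]^*$. *)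

theory Defs
  imports Main
begin

definition simple_graph :: "'a set \<Rightarrow> 'a set set \<Rightarrow> bool" where
  "simple_graph V E \<longleftrightarrow> finite V \<and>
     (\<forall>e\<in>E. \<exists>u v. e = {u, v} \<and> u \<noteq> v \<and> u \<in> V \<and> v \<in> V)"

definition adj_rel :: "'a set set \<Rightarrow> ('a \<times> 'a) set" where
  "adj_rel E = {(u, v). {u, v} \<in> E}"

definition connected_graph :: "'a set \<Rightarrow> 'a set set \<Rightarrow> bool" where
  "connected_graph V E \<longleftrightarrow> V \<noteq> {} \<and> (\<forall>u\<in>V. \<forall>v\<in>V. (u, v) \<in> (adj_rel E)\<^sup>*)"

definition is_cycle :: "'a set \<Rightarrow> 'a set set \<Rightarrow> 'a list \<Rightarrow> bool" where
  "is_cycle V E cs \<longleftrightarrow> distinct cs \<and> length cs \<ge> 3 \<and> set cs \<subseteq> V \<and>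
     (\<forall>i. Suc i < length cs \<longrightarrow> {cs ! i, cs ! Suc i} \<in> E) \<and> {last cs, hd cs} \<in> E"

definition is_tree :: "'a set \<Rightarrow> 'a set set \<Rightarrow> bool" where
  "is_tree V E \<longleftrightarrow> simple_graph V E \<and> connected_graph V E \<and> \<not> (\<exists>cs. is_cycle V E cs)"

definition degree :: "'a set set \<Rightarrow> 'a \<Rightarrow> nat" where
  "degree E v = card {e\<in>E. v \<in> e}"

definition leaves :: "'a set \<Rightarrow> 'a set set \<Rightarrow> 'a set" where
  "leaves V E = {v\<in>V. degree E v = 1}"

definition internal :: "'a set \<Rightarrow> 'a set set \<Rightarrow> 'a set" where
  "internal V E = V - leaves V E"

definition induced_edges :: "'a set set \<Rightarrow> 'a set \<Rightarrow> 'a set set" where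
  "induced_edges E I = {e\<in>E. e \<subseteq> I}"

definition path_listing :: "'a set \<Rightarrow> 'a set set \<Rightarrow> 'a list \<Rightarrow> bool" where
  "path_listing I F vs \<longleftrightarrow> distinct vs \<and> set vs = I \<and> length vs \<ge> 2 \<and>
     F = {{vs ! i, vs ! Suc i} | i. Suc i < length vs}"

definition spine_listing :: "'a set \<Rightarrow> 'a set set \<Rightarrow> 'a list \<Rightarrow> bool" where
  "spine_listing V E vs \<longleftrightarrow>
     path_listing (internal V E) (induced_edges E (internal V E)) vs"

definition caterpillar :: "'a set \<Rightarrow> 'a set set \<Rightarrow> bool" where
  "caterpillar V E \<longleftrightarrow> is_tree V E \<and> (\<exists>vs. spine_listing V E vs)"

definition proper_caterpillar :: "'a set \<Rightarrow> 'a set set \<Rightarrow> bool" where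
  "proper_caterpillar V E \<longleftrightarrow> caterpillar V E \<and>
     (\<forall>v\<in>internal V E. \<exists>w\<in>leaves V E. {v, w} \<in> E)"

definition non_spine_edges :: "'a set \<Rightarrow> 'a set set \<Rightarrow> 'a set set" where
  "non_spine_edges V E = E - induced_edges E (internal V E)"

definition component :: "'a set \<Rightarrow> 'a set set \<Rightarrow> 'a \<Rightarrow> 'a set" where
  "component V F v = {u\<in>V. (v, u) \<in> (adj_rel F)\<^sup>*}"

definition composition_of :: "'a set \<Rightarrow> 'a set set \<Rightarrow> 'a list \<Rightarrow> nat list" where
  "composition_of V E vs = map (\<lambda>v. card (component V (non_spine_edges V E) v)) vs"

text \<open>Phi(T) = reverse-class of beta_1 ... beta_k for a chosen spine ordering.\<close>
definition Phi :: "'a set \<Rightarrow> 'a set set \<Rightarrow> nat list set" where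
  "Phi V E = (let vs = (SOME vs. spine_listing V E vs)
              in {composition_of V E vs, rev (composition_of V E vs)})"

definition graph_iso :: "'a set \<Rightarrow> 'a set set \<Rightarrow> 'b set \<Rightarrow> 'b set set \<Rightarrow> bool" where
  "graph_iso V E V' E' \<longleftrightarrow> (\<exists>f. bij_betw f V V' \<and>
     (\<forall>u\<in>V. \<forall>v\<in>V. {u, v} \<in> E \<longleftrightarrow> {f u, f v} \<in> E'))"

end

theory Submission
  imports Defs
begin

definition att :: "'a set \<Rightarrow> 'a set set \<Rightarrow> 'a \<Rightarrow> 'a set" where
  "att V E v = {w \<in> leaves V E. {v, w} \<in> E}"

lemma pc_simple:
  assumes "proper_caterpillar V E"
  shows "finite V" "\<And>e. e \<in> E \<Longrightarrow> \<exists>u v. e = {u, v} \<and> u \<noteq> v \<and> u \<in> V \<and> v \<in> V"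
  using assms unfolding proper_caterpillar_def caterpillar_def is_tree_def simple_graph_def by auto

lemma pc_finE: assumes "proper_caterpillar V E" shows "finite E"
proof -
  have "E \<subseteq> Pow V" using pc_simple[OF assms] by blast
  thus ?thesis using pc_simple(1)[OF assms] by (meson finite_Pow_iff finite_subset)
qed

lemma edge_in_V: assumes "proper_caterpillar V E" "{a, b} \<in> E" shows "a \<in> V" "b \<in> V" "a \<noteq> b"
  using pc_simple(2)[OF assms(1) assms(2)] by (auto simp: doubleton_eq_iff)

lemma leaf_unique:
  assumes "proper_caterpillar V E" "y \<in> leaves V E" "{y, a} \<in> E" "{y, b} \<in> E"
  shows "a = b"
proof -
  have "card {e\<in>E. y \<in> e} = 1" using assms(2) by (simp add: leaves_def degree_def)
  then obtain e where e: "{e\<in>E. y \<in> e} = {e}" by (rule card_1_singletonE)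
  have "{y,a} \<in> {e\<in>E. y \<in> e}" "{y,b} \<in> {e\<in>E. y \<in> e}" using assms(3,4) by auto
  hence "{y,a} = {y,b}" unfolding e by simp
  thus ?thesis by (auto simp: doubleton_eq_iff)
qed

lemma leaf_has_edge:
  assumes "proper_caterpillar V E" "y \<in> leaves V E"
  obtains u where "{y, u} \<in> E"
proof -
  have "card {e\<in>E. y \<in> e} = 1" using assms(2) by (simp add: leaves_def degree_def)
  then obtain e where e: "{e\<in>E. y \<in> e} = {e}" by (rule card_1_singletonE)
  hence "e \<in> E" "y \<in> e" by auto
  then obtain a b where "e = {a,b}" using pc_simple(2)[OF assms(1)] by blast
  with \<open>y \<in> e\<close> \<open>e \<in> E\<close> have "\<exists>u. {y,u} \<in> E" by (auto simp: insert_commute)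
  thus ?thesis using that by blast
qed

lemma spine_ex: assumes "proper_caterpillar V E" obtains vs where "spine_listing V E vs"
  using assms unfolding proper_caterpillar_def caterpillar_def by blast

lemma leaf_nb_internal:
  assumes pc: "proper_caterpillar V E" and w: "w \<in> leaves V E" and e: "{w, u} \<in> E"
  shows "u \<in> internal V E"
proof (rule ccontr)
  assume "u \<notin> internal V E"
  moreover have "u \<in> V" using edge_in_V[OF pc e] by simp
  ultimately have u: "u \<in> leaves V E" by (simp add: internal_def)
  have cl: "x \<in> {w, u}" if "(w, x) \<in> (adj_rel E)\<^sup>*" for x
    using that
  proof (induction rule: rtrancl_induct)
    case base then show ?case by simp
  next
    case (step y z)
    hence yz: "{y, z} \<in> E" by (simp add: adj_rel_def)
    show ?case
    proof (cases "y = w")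
      case True
      then show ?thesis using leaf_unique[OF pc w e, of z] yz by simp
    next
      case False
      hence "y = u" using step by simp
      have "{u, w} \<in> E" using e by (simp add: insert_commute)
      then show ?thesis using leaf_unique[OF pc u _, of w z] yz \<open>y = u\<close> by simp
    qed
  qed
  obtain vs where "spine_listing V E vs" using spine_ex[OF pc] .
  hence "internal V E \<noteq> {}" unfolding spine_listing_def path_listing_def by auto
  then obtain x where x: "x \<in> internal V E" by blast
  hence "x \<in> V" "x \<notin> leaves V E" by (auto simp: internal_def)
  have "w \<in> V" using w by (simp add: leaves_def)
  have "connected_graph V E" using pc
    unfolding proper_caterpillar_def caterpillar_def is_tree_def by simp
  hence "(w, x) \<in> (adj_rel E)\<^sup>*" using \<open>x \<in> V\<close> \<open>w \<in> V\<close> by (simp add: connected_graph_def)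
  hence "x \<in> {w, u}" by (rule cl)
  thus False using \<open>x \<notin> leaves V E\<close> w u by auto
qed

lemma component_eq:
  assumes pc: "proper_caterpillar V E" and v: "v \<in> internal V E"
  shows "component V (non_spine_edges V E) v = insert v (att V E v)"
proof
  show "insert v (att V E v) \<subseteq> component V (non_spine_edges V E) v"
  proof
    fix x assume "x \<in> insert v (att V E v)"
    then show "x \<in> component V (non_spine_edges V E) v"
    proof
      assume "x = v" thus ?thesis using v by (simp add: component_def internal_def)
    next
      assume "x \<in> att V E v"
      hence xl: "x \<in> leaves V E" and ed: "{v, x} \<in> E" by (auto simp: att_def)
      hence "x \<notin> internal V E" by (simp add: internal_def)
      hence "{v, x} \<in> non_spine_edges V E" using ed
        by (simp add: non_spine_edges_def induced_edges_def)
      hence "(v, x) \<in> (adj_rel (non_spine_edges V E))\<^sup>*" by (simp add: adj_rel_def r_into_rtrancl)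
      thus ?thesis using xl by (simp add: component_def leaves_def)
    qed
  qed
next
  show "component V (non_spine_edges V E) v \<subseteq> insert v (att V E v)"
  proof
    fix x assume "x \<in> component V (non_spine_edges V E) v"
    hence "(v, x) \<in> (adj_rel (non_spine_edges V E))\<^sup>*" by (simp add: component_def)
    then show "x \<in> insert v (att V E v)"
    proof (induction rule: rtrancl_induct)
      case base then show ?case by simp
    next
      case (step y z)
      hence yz: "{y, z} \<in> E" "\<not> {y, z} \<subseteq> internal V E"
        by (auto simp: adj_rel_def non_spine_edges_def induced_edges_def)
      show ?case
      proof (cases "y = v")
        case True
        hence "z \<notin> internal V E" using yz v by auto
        moreover have "z \<in> V" using edge_in_V[OF pc yz(1)] by simp
        ultimately show ?thesis using yz True by (auto simp: att_def internal_def)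
      next
        case False
        hence "y \<in> att V E v" using step by simp
        hence yl: "y \<in> leaves V E" and "{y, v} \<in> E" by (auto simp: att_def insert_commute)
        then have "z = v" using leaf_unique[OF pc yl yz(1)] by simp
        thus ?thesis by simp
      qed
    qed
  qed
qed


lemma spine_props:
  assumes "spine_listing V E vs"
  shows "distinct vs" "set vs = internal V E" "length vs \<ge> 2"
    "induced_edges E (internal V E) = {{vs ! i, vs ! Suc i} | i. Suc i < length vs}"
  using assms unfolding spine_listing_def path_listing_def by auto

lemma att_leaves: "att V E v \<subseteq> leaves V E" by (auto simp: att_def)

lemma leaves_V: "leaves V E \<subseteq> V" by (auto simp: leaves_def)

lemma V_blocks:
  assumes pc: "proper_caterpillar V E" and sp: "spine_listing V E vs" and x: "x \<in> V"
  shows "\<exists>i<length vs. x \<in> insert (vs!i) (att V E (vs!i))"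
proof (cases "x \<in> internal V E")
  case True
  then show ?thesis using spine_props(2)[OF sp] by (metis in_set_conv_nth insertI1)
next
  case False
  hence xl: "x \<in> leaves V E" using x by (simp add: internal_def)
  obtain u where e: "{x, u} \<in> E" using leaf_has_edge[OF pc xl] .
  hence "u \<in> internal V E" using leaf_nb_internal[OF pc xl] by simp
  then obtain i where i: "i < length vs" "u = vs ! i" using spine_props(2)[OF sp] by (metis in_set_conv_nth)
  have "x \<in> att V E u" using e xl by (simp add: att_def insert_commute)
  thus ?thesis using i by blast
qed

lemma blocks_sub:
  assumes pc: "proper_caterpillar V E" and sp: "spine_listing V E vs" and i: "i < length vs"
  shows "insert (vs!i) (att V E (vs!i)) \<subseteq> V"
proof -
  have "vs ! i \<in> internal V E" using spine_props(2)[OF sp] i by (metis nth_mem)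
  thus ?thesis using att_leaves leaves_V by (fastforce simp: internal_def)
qed

lemma vs_internal: assumes sp: "spine_listing V E vs" and i: "i < length vs"
  shows "vs ! i \<in> internal V E" "vs ! i \<notin> att V E (vs ! i)"
proof -
  have "vs ! i \<in> set vs" using i by (rule nth_mem)
  thus a: "vs ! i \<in> internal V E" using spine_props(2)[OF sp] by simp
  hence "vs ! i \<notin> leaves V E" by (simp add: internal_def)
  thus "vs ! i \<notin> att V E (vs ! i)" by (simp add: att_def)
qed

lemma blocks_disj:
  assumes pc: "proper_caterpillar V E" and sp: "spine_listing V E vs"
    and i: "i < length vs" and j: "j < length vs"
    and x: "x \<in> insert (vs!i) (att V E (vs!i))" "x \<in> insert (vs!j) (att V E (vs!j))"
  shows "i = j"
proof -
  have ii: "vs ! i \<in> internal V E" "vs ! j \<in> internal V E" using vs_internal sp i j by auto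
  have d: "distinct vs" using spine_props[OF sp] by simp
  have "vs ! i = vs ! j"
  proof (cases "x = vs ! i")
    case True
    hence "x \<notin> leaves V E" using ii by (simp add: internal_def)
    thus ?thesis using x True by (auto simp: att_def)
  next
    case False
    hence xa: "x \<in> att V E (vs!i)" using x by simp
    hence xl: "x \<in> leaves V E" and e1: "{x, vs!i} \<in> E" by (auto simp: att_def insert_commute)
    have "x \<noteq> vs ! j" using xl ii by (auto simp: internal_def)
    hence "x \<in> att V E (vs!j)" using x by simp
    hence e2: "{x, vs!j} \<in> E" by (auto simp: att_def insert_commute)
    show ?thesis using leaf_unique[OF pc xl e1 e2] .
  qed
  thus ?thesis using nth_eq_iff_index_eq[OF d i j] by simp
qed

lemma block_card:
  assumes pc: "proper_caterpillar V E" and sp: "spine_listing V E vs" and i: "i < length vs"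
  shows "composition_of V E vs ! i = card (insert (vs!i) (att V E (vs!i)))"
  using component_eq[OF pc vs_internal(1)[OF sp i]] i by (simp add: composition_of_def)

lemma path_edge_iff:
  assumes sp: "spine_listing V E vs" and i: "i < length vs" and j: "j < length vs"
  shows "{vs!i, vs!j} \<in> E \<longleftrightarrow> (j = Suc i \<or> i = Suc j)"
proof
  have d: "distinct vs" using spine_props[OF sp] by simp
  assume e: "{vs!i, vs!j} \<in> E"
  have "{vs!i, vs!j} \<subseteq> internal V E" using vs_internal(1)[OF sp] i j by simp
  hence "{vs!i, vs!j} \<in> induced_edges E (internal V E)" using e by (simp add: induced_edges_def)
  then obtain m where m: "Suc m < length vs" "{vs!i, vs!j} = {vs!m, vs!Suc m}"
    using spine_props(4)[OF sp] by auto
  hence "(vs!i = vs!m \<and> vs!j = vs!Suc m) \<or> (vs!i = vs!Suc m \<and> vs!j = vs!m)"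
    by (simp add: doubleton_eq_iff)
  moreover have m1: "m < length vs" using m(1) by simp
  ultimately show "j = Suc i \<or> i = Suc j"
    using nth_eq_iff_index_eq[OF d i m1] nth_eq_iff_index_eq[OF d j m(1)]
      nth_eq_iff_index_eq[OF d i m(1)] nth_eq_iff_index_eq[OF d j m1] by blast
next
  assume a: "j = Suc i \<or> i = Suc j"
  have "\<exists>m. Suc m < length vs \<and> {vs!i, vs!j} = {vs!m, vs!Suc m}"
  proof (cases "j = Suc i")
    case True thus ?thesis using j by blast
  next
    case False hence "i = Suc j" using a by simp
    thus ?thesis using i by (metis insert_commute)
  qed
  then obtain m where m: "Suc m < length vs" and eq: "{vs!i, vs!j} = {vs!m, vs!Suc m}" by blast
  have "{vs!m, vs!Suc m} \<in> induced_edges E (internal V E)"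
    unfolding spine_props(4)[OF sp] using m by (intro CollectI exI[of _ m]) simp
  thus "{vs!i, vs!j} \<in> E" unfolding eq by (simp add: induced_edges_def)
qed

lemma block_char:
  assumes pc: "proper_caterpillar V E" and sp: "spine_listing V E vs"
    and i: "i < length vs" and j: "j < length vs"
    and u: "u \<in> insert (vs!i) (att V E (vs!i))" and v: "v \<in> insert (vs!j) (att V E (vs!j))"
  shows "{u, v} \<in> E \<longleftrightarrow> (u = vs!i \<and> v = vs!j \<and> (j = Suc i \<or> i = Suc j))
                       \<or> (i = j \<and> (u = vs!i) \<noteq> (v = vs!i))"
proof -
  have d: "distinct vs" using spine_props[OF sp] by simp
  have ii: "vs ! i \<in> internal V E" "vs ! j \<in> internal V E" using vs_internal sp i j by auto
  show ?thesis
  proof (cases "u = vs!i")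
    case uT: True
    show ?thesis
    proof (cases "v = vs!j")
      case True
      then show ?thesis using uT path_edge_iff[OF sp i j] nth_eq_iff_index_eq[OF d i j] by auto
    next
      case False
      hence va: "v \<in> att V E (vs!j)" using v by simp
      hence vl: "v \<in> leaves V E" and e2: "{v, vs!j} \<in> E" by (auto simp: att_def insert_commute)
      have vne: "v \<noteq> vs ! i" using vl ii by (auto simp: internal_def)
      show ?thesis
      proof
        assume "{u, v} \<in> E"
        hence "{v, vs!i} \<in> E" using uT by (simp add: insert_commute)
        hence "vs!i = vs!j" using leaf_unique[OF pc vl _ e2] by simp
        hence "i = j" using nth_eq_iff_index_eq[OF d i j] by simp
        thus "(u = vs!i \<and> v = vs!j \<and> (j = Suc i \<or> i = Suc j)) \<or> (i = j \<and> (u = vs!i) \<noteq> (v = vs!i))"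
          using uT vne by simp
      next
        assume "(u = vs!i \<and> v = vs!j \<and> (j = Suc i \<or> i = Suc j)) \<or> (i = j \<and> (u = vs!i) \<noteq> (v = vs!i))"
        hence "i = j" using False by auto
        thus "{u, v} \<in> E" using uT e2 by (simp add: insert_commute)
      qed
    qed
  next
    case uF: False
    hence ua: "u \<in> att V E (vs!i)" using u by simp
    hence ul: "u \<in> leaves V E" and e1: "{u, vs!i} \<in> E" by (auto simp: att_def insert_commute)
    have une: "u \<noteq> vs ! j" using ul ii by (auto simp: internal_def)
    show ?thesis
    proof (cases "v = vs!j")
      case True
      show ?thesis
      proof
        assume "{u, v} \<in> E"
        hence "vs!i = vs!j" using leaf_unique[OF pc ul e1] True by simp
        hence "i = j" using nth_eq_iff_index_eq[OF d i j] by simp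
        thus "(u = vs!i \<and> v = vs!j \<and> (j = Suc i \<or> i = Suc j)) \<or> (i = j \<and> (u = vs!i) \<noteq> (v = vs!i))"
          using uF True by simp
      next
        assume "(u = vs!i \<and> v = vs!j \<and> (j = Suc i \<or> i = Suc j)) \<or> (i = j \<and> (u = vs!i) \<noteq> (v = vs!i))"
        hence "i = j" using uF by auto
        thus "{u, v} \<in> E" using True e1 by simp
      qed
    next
      case False
      hence "v \<in> att V E (vs!j)" using v by simp
      hence vl: "v \<in> leaves V E" by (simp add: att_def)
      have "{u, v} \<notin> E"
      proof
        assume "{u, v} \<in> E"
        hence "v \<in> internal V E" using leaf_nb_internal[OF pc ul] by simp
        thus False using vl by (simp add: internal_def)
      qed
      moreover have "v \<noteq> vs ! i" using vl ii by (auto simp: internal_def)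
      ultimately show ?thesis using uF False by auto
    qed
  qed
qed


lemma rev_edges_sub:
  "{{rev xs ! i, rev xs ! Suc i} | i. Suc i < length xs} \<subseteq> {{xs ! i, xs ! Suc i} | i. Suc i < length xs}"
proof
  fix e assume "e \<in> {{rev xs ! i, rev xs ! Suc i} | i. Suc i < length xs}"
  then obtain i where i: "Suc i < length xs" and e: "e = {rev xs ! i, rev xs ! Suc i}" by blast
  define m where "m = length xs - Suc (Suc i)"
  have m: "Suc m < length xs" "length xs - Suc i = Suc m" "length xs - Suc (Suc i) = m"
    using i by (auto simp: m_def)
  have "rev xs ! i = xs ! Suc m" using i m(2) by (simp add: rev_nth)
  moreover have "rev xs ! Suc i = xs ! m" using i m(3) by (simp add: rev_nth)
  ultimately have "e = {xs ! m, xs ! Suc m}" using e by (simp add: insert_commute)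
  thus "e \<in> {{xs ! i, xs ! Suc i} | i. Suc i < length xs}" using m(1) by blast
qed

lemma rev_edges:
  "{{rev xs ! i, rev xs ! Suc i} | i. Suc i < length xs} = {{xs ! i, xs ! Suc i} | i. Suc i < length xs}"
proof
  show "{{rev xs ! i, rev xs ! Suc i} | i. Suc i < length xs} \<subseteq> {{xs ! i, xs ! Suc i} | i. Suc i < length xs}"
    by (rule rev_edges_sub)
  have "{{rev (rev xs) ! i, rev (rev xs) ! Suc i} | i. Suc i < length (rev xs)} \<subseteq> {{rev xs ! i, rev xs ! Suc i} | i. Suc i < length (rev xs)}"
    by (rule rev_edges_sub)
  thus "{{xs ! i, xs ! Suc i} | i. Suc i < length xs} \<subseteq> {{rev xs ! i, rev xs ! Suc i} | i. Suc i < length xs}"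
    by simp
qed

lemma spine_rev: assumes "spine_listing V E vs" shows "spine_listing V E (rev vs)"
  using assms rev_edges[of vs] unfolding spine_listing_def path_listing_def by simp

lemma comp_rev: "composition_of V E (rev vs) = rev (composition_of V E vs)"
  by (simp add: composition_of_def rev_map)

lemma blocks_bij:
  assumes AV: "\<And>x. x \<in> V \<Longrightarrow> idx x < k \<and> x \<in> A (idx x)"
    and AsubV: "\<And>i. i < k \<Longrightarrow> A i \<subseteq> V"
    and BsubV: "\<And>i. i < k \<Longrightarrow> B i \<subseteq> V'"
    and BV: "\<And>y. y \<in> V' \<Longrightarrow> \<exists>i<k. y \<in> B i"
    and Bdisj: "\<And>i j y. i < k \<Longrightarrow> j < k \<Longrightarrow> y \<in> B i \<Longrightarrow> y \<in> B j \<Longrightarrow> i = j"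
    and Adisj: "\<And>i j y. i < k \<Longrightarrow> j < k \<Longrightarrow> y \<in> A i \<Longrightarrow> y \<in> A j \<Longrightarrow> i = j"
    and g: "\<And>i. i < k \<Longrightarrow> bij_betw (g i) (A i) (B i)"
  shows "bij_betw (\<lambda>x. g (idx x) x) V V'"
  unfolding bij_betw_def
proof
  show "inj_on (\<lambda>x. g (idx x) x) V"
  proof
    fix x y assume x: "x \<in> V" and y: "y \<in> V" and eq: "g (idx x) x = g (idx y) y"
    have xi: "idx x < k" "x \<in> A (idx x)" using AV[OF x] by auto
    have yi: "idx y < k" "y \<in> A (idx y)" using AV[OF y] by auto
    have "g (idx x) x \<in> B (idx x)" using g[OF xi(1)] xi(2) by (auto simp: bij_betw_def)
    moreover have "g (idx y) y \<in> B (idx y)" using g[OF yi(1)] yi(2) by (auto simp: bij_betw_def)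
    ultimately have "idx x = idx y" using Bdisj[OF xi(1) yi(1)] eq by simp
    thus "x = y" using g[OF xi(1)] xi(2) yi(2) eq by (auto simp: bij_betw_def inj_on_def)
  qed
next
  show "(\<lambda>x. g (idx x) x) ` V = V'"
  proof
    show "(\<lambda>x. g (idx x) x) ` V \<subseteq> V'"
    proof
      fix y assume "y \<in> (\<lambda>x. g (idx x) x) ` V"
      then obtain x where x: "x \<in> V" and y: "y = g (idx x) x" by blast
      have xi: "idx x < k" "x \<in> A (idx x)" using AV[OF x] by auto
      have "g (idx x) x \<in> B (idx x)" using g[OF xi(1)] xi(2) by (auto simp: bij_betw_def)
      thus "y \<in> V'" using BsubV[OF xi(1)] y by blast
    qed
  next
    show "V' \<subseteq> (\<lambda>x. g (idx x) x) ` V"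
    proof
      fix y assume "y \<in> V'"
      then obtain i where i: "i < k" "y \<in> B i" using BV by blast
      then obtain x where x: "x \<in> A i" "y = g i x" using g[OF i(1)] by (auto simp: bij_betw_def)
      have xV: "x \<in> V" using AsubV[OF i(1)] x(1) by blast
      have "idx x = i" using Adisj[OF _ i(1) _ x(1)] AV[OF xV] by blast
      thus "y \<in> (\<lambda>x. g (idx x) x) ` V" using x xV by auto
    qed
  qed
qed


lemma iso_core:
  assumes pc: "proper_caterpillar V E" and pc': "proper_caterpillar V' E'"
    and sp: "spine_listing V E vs" and sp': "spine_listing V' E' ws"
    and ceq: "composition_of V E vs = composition_of V' E' ws"
  shows "graph_iso V E V' E'"
proof -
  define k where "k = length vs"
  have lk: "length ws = k" using arg_cong[OF ceq, of length] by (simp add: composition_of_def k_def)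
  define A where "A i = insert (vs!i) (att V E (vs!i))" for i
  define B where "B i = insert (ws!i) (att V' E' (ws!i))" for i
  have ex: "\<exists>gi. i < k \<longrightarrow> bij_betw gi (A i) (B i) \<and> gi (vs!i) = ws!i" for i
  proof (cases "i < k")
    case False thus ?thesis by simp
  next
    case True
    hence ik: "i < length vs" "i < length ws" using lk k_def by auto
    have "card (A i) = card (B i)"
      using block_card[OF pc sp ik(1)] block_card[OF pc' sp' ik(2)] ceq by (simp add: A_def B_def)
    moreover have fa: "finite (att V E (vs!i))"
      using finite_subset[OF _ pc_simple(1)[OF pc]] blocks_sub[OF pc sp ik(1)] by blast
    moreover have fb: "finite (att V' E' (ws!i))"
      using finite_subset[OF _ pc_simple(1)[OF pc']] blocks_sub[OF pc' sp' ik(2)] by blast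
    ultimately have "card (att V E (vs!i)) = card (att V' E' (ws!i))"
      using vs_internal(2)[OF sp ik(1)] vs_internal(2)[OF sp' ik(2)] by (simp add: A_def B_def)
    then obtain h where h: "bij_betw h (att V E (vs!i)) (att V' E' (ws!i))"
      using finite_same_card_bij[OF fa fb] by blast
    define gi where "gi x = (if x = vs!i then ws!i else h x)" for x
    have "bij_betw gi (att V E (vs!i)) (att V' E' (ws!i))"
      using h vs_internal(2)[OF sp ik(1)] by (subst bij_betw_cong[where g = h]) (auto simp: gi_def)
    moreover have "bij_betw gi {vs!i} {ws!i}" by (simp add: gi_def bij_betw_def)
    moreover have "att V' E' (ws!i) \<inter> {ws!i} = {}" using vs_internal(2)[OF sp' ik(2)] by simp
    ultimately have "bij_betw gi (att V E (vs!i) \<union> {vs!i}) (att V' E' (ws!i) \<union> {ws!i})"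
      by (rule bij_betw_combine)
    hence "bij_betw gi (A i) (B i)" by (simp add: A_def B_def)
    thus ?thesis by (intro exI[of _ gi]) (simp add: gi_def)
  qed
  have "\<forall>i. \<exists>gi. i < k \<longrightarrow> bij_betw gi (A i) (B i) \<and> gi (vs!i) = ws!i" using ex by blast
  from choice[OF this] obtain g where
    g0: "\<forall>i. i < k \<longrightarrow> bij_betw (g i) (A i) (B i) \<and> g i (vs!i) = ws!i" by blast
  have g: "\<And>i. i < k \<Longrightarrow> bij_betw (g i) (A i) (B i) \<and> g i (vs!i) = ws!i" using g0 by blast
  define idx where "idx x = (SOME i. i < k \<and> x \<in> A i)" for x
  have AV: "idx x < k \<and> x \<in> A (idx x)" if "x \<in> V" for x
  proof -
    have "\<exists>i. i < k \<and> x \<in> A i" using V_blocks[OF pc sp that] by (simp add: A_def k_def)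
    thus ?thesis unfolding idx_def by (rule someI_ex)
  qed
  have Adisj: "i = j" if "i < k" "j < k" "y \<in> A i" "y \<in> A j" for i j y
    using blocks_disj[OF pc sp, of i j y] that by (simp add: A_def k_def)
  have Bdisj: "i = j" if "i < k" "j < k" "y \<in> B i" "y \<in> B j" for i j y
    using blocks_disj[OF pc' sp', of i j y] that by (simp add: B_def lk)
  have idx_eq: "idx x = i" if "i < k" "x \<in> A i" for i x
  proof -
    have "x \<in> V" using blocks_sub[OF pc sp, of i] that by (auto simp: A_def k_def)
    thus ?thesis using AV Adisj that by blast
  qed
  define f where "f x = g (idx x) x" for x
  have bij: "bij_betw f V V'" unfolding f_def
  proof (rule blocks_bij[where A = A and B = B and k = k])
    show "idx x < k \<and> x \<in> A (idx x)" if "x \<in> V" for x using AV that .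
    show "A i \<subseteq> V" if "i < k" for i using blocks_sub[OF pc sp, of i] that by (simp add: A_def k_def)
    show "B i \<subseteq> V'" if "i < k" for i using blocks_sub[OF pc' sp', of i] that by (simp add: B_def lk)
    show "\<exists>i<k. y \<in> B i" if "y \<in> V'" for y using V_blocks[OF pc' sp' that] by (simp add: B_def lk)
    show "i = j" if "i < k" "j < k" "y \<in> B i" "y \<in> B j" for i j y using Bdisj that .
    show "i = j" if "i < k" "j < k" "y \<in> A i" "y \<in> A j" for i j y using Adisj that .
    show "bij_betw (g i) (A i) (B i)" if "i < k" for i using g that by blast
  qed
  have geq: "(g i u = ws!i) \<longleftrightarrow> (u = vs!i)" if "i < k" "u \<in> A i" for i u
  proof
    assume "g i u = ws ! i"
    hence "g i u = g i (vs!i)" using g[OF that(1)] by simp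
    moreover have "vs!i \<in> A i" by (simp add: A_def)
    ultimately show "u = vs!i" using g[OF that(1)] that(2) by (auto simp: bij_betw_def inj_on_def)
  next
    assume "u = vs!i" thus "g i u = ws!i" using g[OF that(1)] by simp
  qed
  have gB: "g i u \<in> B i" if "i < k" "u \<in> A i" for i u
    using g[OF that(1)] that(2) by (auto simp: bij_betw_def)
  have "\<forall>u\<in>V. \<forall>v\<in>V. {u, v} \<in> E \<longleftrightarrow> {f u, f v} \<in> E'"
  proof (intro ballI)
    fix u v assume u: "u \<in> V" and v: "v \<in> V"
    define i where "i = idx u"
    define j where "j = idx v"
    have ui: "i < k" "u \<in> A i" using AV[OF u] by (auto simp: i_def)
    have vj: "j < k" "v \<in> A j" using AV[OF v] by (auto simp: j_def)
    have fu: "f u = g i u" and fv: "f v = g j v" by (simp_all add: f_def i_def j_def)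
    have c1: "{u, v} \<in> E \<longleftrightarrow> (u = vs!i \<and> v = vs!j \<and> (j = Suc i \<or> i = Suc j))
                       \<or> (i = j \<and> (u = vs!i) \<noteq> (v = vs!i))"
      using block_char[OF pc sp, of i j u v] ui vj by (simp add: A_def k_def)
    have c2: "{g i u, g j v} \<in> E' \<longleftrightarrow> (g i u = ws!i \<and> g j v = ws!j \<and> (j = Suc i \<or> i = Suc j))
                       \<or> (i = j \<and> (g i u = ws!i) \<noteq> (g j v = ws!i))"
      using block_char[OF pc' sp', of i j "g i u" "g j v"] ui vj gB[OF ui] gB[OF vj]
      by (simp add: B_def lk)
    have e1: "(g i u = ws!i) \<longleftrightarrow> (u = vs!i)" using geq ui by blast
    have e2: "(g j v = ws!j) \<longleftrightarrow> (v = vs!j)" using geq vj by blast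
    show "{u, v} \<in> E \<longleftrightarrow> {f u, f v} \<in> E'"
    proof (cases "i = j")
      case True
      thus ?thesis using c1 c2 e1 e2 fu fv by simp
    next
      case False
      thus ?thesis using c1 c2 e1 e2 fu fv by simp
    qed
  qed
  thus ?thesis using bij unfolding graph_iso_def by blast
qed

theorem lemma2p2:
  fixes V :: "'a set" and E :: "'a set set" and V' :: "'b set" and E' :: "'b set set"
  assumes "proper_caterpillar V E" and "proper_caterpillar V' E'"
    and "Phi V E = Phi V' E'"
  shows "graph_iso V E V' E'"
proof -
  define vs where "vs = (SOME vs. spine_listing V E vs)"
  define ws where "ws = (SOME vs. spine_listing V' E' vs)"
  have sp: "spine_listing V E vs" unfolding vs_def
    using spine_ex[OF assms(1)] by (metis someI_ex)
  have sp': "spine_listing V' E' ws" unfolding ws_def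
    using spine_ex[OF assms(2)] by (metis someI_ex)
  have "{composition_of V E vs, rev (composition_of V E vs)} =
        {composition_of V' E' ws, rev (composition_of V' E' ws)}"
    using assms(3) unfolding Phi_def Let_def vs_def ws_def .
  hence "composition_of V E vs = composition_of V' E' ws \<or>
         composition_of V E vs = rev (composition_of V' E' ws)" by blast
  thus ?thesis
  proof
    assume "composition_of V E vs = composition_of V' E' ws"
    thus ?thesis using iso_core[OF assms(1,2) sp sp'] by simp
  next
    assume "composition_of V E vs = rev (composition_of V' E' ws)"
    hence "composition_of V E vs = composition_of V' E' (rev ws)" by (simp add: comp_rev)
    thus ?thesis using iso_core[OF assms(1,2) sp spine_rev[OF sp']] by simp
  qed
qed

end
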